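(* Let $A\in\mathbb{R}^{nd\times nd}$ be symmetric with $A\succ0$ and $b\in\mathbb{R}^{nd}$, and suppose $Au+b=0$ has a unique solution $u_*$. Consider the iteration $$u_{\ell+1}=u_\ell-\delta\eta\,(A u_{\ell-1}+b),\qquad \ell\ge1,$$ with $u_0=u_1=0$. Then, for $\delta\eta\in\big(0,1/(4\lambda_{\max}(A))\big)$, $u_\ell\to u_*$ as $\ell\to\infty$.
   Context: $\lambda_{\max}(A)$ denotes the largest eigenvalue of $A$. In the paper, $A=(I-\frac{\partial c}{\partial p})^\top(I-\frac{\partial c}{\partial p})$ and $Au+b=\nabla F(u)$ for the least-squares objective $F$ of the coverage control problem. *)

theory Defs
  imports "HOL-Analysis.Analysis"
begin

definition lambda_max :: "real^'n^'n \<Rightarrow> real" where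
  "lambda_max A = Max {l. \<exists>v. v \<noteq> 0 \<and> A *v v = l *\<^sub>R v}"

definition pos_def :: "real^'n^'n \<Rightarrow> bool" where
  "pos_def A \<longleftrightarrow> (\<forall>x. x \<noteq> 0 \<longrightarrow> x \<bullet> (A *v x) > 0)"

end

theory Submission
  imports Defs
begin

lemma sym_dot:
  fixes A :: "real^'n^'n"
  assumes "transpose A = A"
  shows "x \<bullet> (A *v y) = (A *v x) \<bullet> y"
  by (metis assms dot_lmul_matrix transpose_matrix_vector)

lemma psd_eig:
  fixes A :: "real^'n^'n"
  assumes symm: "transpose A = A"
    and le: "\<And>x. x \<bullet> (A *v x) \<le> \<mu> * (x \<bullet> x)"
    and eq: "v \<bullet> (A *v v) = \<mu> * (v \<bullet> v)"
  shows "A *v v = \<mu> *\<^sub>R v"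
proof -
  define w where "w = \<mu> *\<^sub>R v - A *v v"
  define s where "s = w \<bullet> w"
  define K where "K = \<mu> * (w \<bullet> w) - w \<bullet> (A *v w)"
  have K0: "K \<ge> 0" using le[of w] by (simp add: K_def)
  have key: "0 \<le> 2 * t * s + t^2 * K" for t
  proof -
    have H: "(v + t *\<^sub>R w) \<bullet> (A *v (v + t *\<^sub>R w)) \<le> \<mu> * ((v + t *\<^sub>R w) \<bullet> (v + t *\<^sub>R w))"
      by (rule le)
    have p: "v \<bullet> (A *v w) = w \<bullet> (A *v v)" using sym_dot[OF symm, of v w] by (simp add: inner_commute)
    have E1: "(v + t *\<^sub>R w) \<bullet> (A *v (v + t *\<^sub>R w)) = v \<bullet> (A *v v) + 2 * t * (w \<bullet> (A *v v)) + t^2 * (w \<bullet> (A *v w))"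
      using p by (simp add: matrix_vector_right_distrib matrix_vector_mult_scaleR inner_add_left inner_add_right power2_eq_square algebra_simps)
    have E2: "\<mu> * ((v + t *\<^sub>R w) \<bullet> (v + t *\<^sub>R w)) = \<mu> * (v \<bullet> v) + 2 * t * (\<mu> * (v \<bullet> w)) + t^2 * (\<mu> * (w \<bullet> w))"
      by (simp add: inner_add_left inner_add_right power2_eq_square inner_commute algebra_simps)
    have E3: "s = \<mu> * (v \<bullet> w) - w \<bullet> (A *v v)"
      by (simp add: s_def w_def inner_diff_left inner_commute)
    have E4: "2 * t * s + t^2 * K = 2 * t * (\<mu> * (v \<bullet> w)) + t^2 * (\<mu> * (w \<bullet> w)) - (2 * t * (w \<bullet> (A *v v)) + t^2 * (w \<bullet> (A *v w)))"
      unfolding E3 K_def by (simp add: algebra_simps)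
    show ?thesis using H E1 E2 E4 eq by linarith
  qed
  have s0: "s \<ge> 0" by (simp add: s_def)
  have "s = 0"
  proof (rule ccontr)
    assume "s \<noteq> 0"
    hence sp: "s > 0" using s0 by simp
    define t where "t = - s / (K + 1)"
    have "0 \<le> 2 * t * s + t^2 * K" by (rule key)
    have tn: "t < 0" using sp K0 by (simp add: t_def)
    have "K / (K + 1) < 1" using K0 by simp
    hence "s * (K / (K + 1)) < s" using sp by (metis mult.right_neutral mult_strict_left_mono)
    moreover have "t * K = - (s * (K / (K + 1)))" by (simp add: t_def)
    ultimately have "2 * s + t * K > 0" using sp by linarith
    hence "t * (2 * s + t * K) < 0" using tn by (simp add: mult_neg_pos)
    moreover have "2 * t * s + t^2 * K = t * (2 * s + t * K)" by (simp add: power2_eq_square algebra_simps)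
    ultimately have "2 * t * s + t^2 * K < 0" by simp
    thus False using \<open>0 \<le> 2 * t * s + t^2 * K\<close> by simp
  qed
  hence "w = 0" by (simp add: s_def)
  thus ?thesis by (simp add: w_def)
qed

lemma finite_eigs:
  fixes A :: "real^'n^'n"
  assumes symm: "transpose A = A"
  shows "finite {l. \<exists>v. v \<noteq> 0 \<and> A *v v = l *\<^sub>R v}"
proof -
  define L where "L = {l. \<exists>v. v \<noteq> 0 \<and> A *v v = l *\<^sub>R v}"
  define g where "g l = (SOME v. v \<noteq> 0 \<and> A *v v = l *\<^sub>R v)" for l
  have g: "g l \<noteq> 0 \<and> A *v g l = l *\<^sub>R g l" if "l \<in> L" for l
    using that unfolding L_def g_def by (metis (mono_tags, lifting) mem_Collect_eq someI_ex)
  have inj: "inj_on g L"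
  proof (rule inj_onI)
    fix l1 l2 assume a: "l1 \<in> L" "l2 \<in> L" "g l1 = g l2"
    have "l1 *\<^sub>R g l1 = l2 *\<^sub>R g l1" using g[OF a(1)] g[OF a(2)] a(3) by metis
    thus "l1 = l2" using g[OF a(1)] by (metis scaleR_cancel_right)
  qed
  have orth: "pairwise orthogonal (g ` L)"
    unfolding pairwise_def
  proof (intro ballI impI)
    fix x y assume x: "x \<in> g ` L" and y: "y \<in> g ` L" and ne: "x \<noteq> y"
    then obtain l1 l2 where l: "l1 \<in> L" "l2 \<in> L" "x = g l1" "y = g l2" by auto
    have ne': "l1 \<noteq> l2" using ne l by auto
    have "l1 * (x \<bullet> y) = (A *v x) \<bullet> y" using g[OF l(1)] l(3) by (simp only: inner_scaleR_left)
    also have "\<dots> = x \<bullet> (A *v y)" using sym_dot[OF symm] by simp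
    also have "\<dots> = l2 * (x \<bullet> y)" using g[OF l(2)] l(4) by (simp only: inner_scaleR_right)
    finally have "(l1 - l2) * (x \<bullet> y) = 0" by (simp add: algebra_simps)
    thus "orthogonal x y" using ne' by (simp add: orthogonal_def)
  qed
  have "0 \<notin> g ` L" using g by auto
  hence "independent (g ` L)" using orth pairwise_orthogonal_independent by blast
  hence "finite (g ` L)" using independent_imp_finite by blast
  hence "finite L" using finite_imageD inj by blast
  thus ?thesis by (simp add: L_def)
qed

lemma lmax_bound:
  fixes A :: "real^'n^'n"
  assumes symm: "transpose A = A" and pd: "pos_def A"
  shows "0 < lambda_max A \<and> (\<forall>x. x \<bullet> (A *v x) \<le> lambda_max A * (x \<bullet> x))"
proof -
  define f where "f x = x \<bullet> (A *v x)" for x :: "real^'n"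
  have "\<exists>v\<in>sphere 0 1. \<forall>y\<in>sphere 0 1. f y \<le> f v"
    by (rule continuous_attains_sup) (auto simp: f_def intro!: continuous_intros)
  then obtain v where v: "v \<in> sphere 0 1" and vmax: "\<And>y. y \<in> sphere 0 1 \<Longrightarrow> f y \<le> f v" by blast
  define \<mu> where "\<mu> = f v"
  have vv: "v \<bullet> v = 1" using v by (simp add: dot_square_norm)
  have bound: "f x \<le> \<mu> * (x \<bullet> x)" for x
  proof (cases "x = 0")
    case True thus ?thesis by (simp add: f_def)
  next
    case False
    define y where "y = (1 / norm x) *\<^sub>R x"
    have "y \<in> sphere 0 1" using False by (simp add: y_def)
    hence "f y \<le> \<mu>" using vmax by (simp add: \<mu>_def)
    moreover have "f y = f x / (norm x)^2"
      by (simp add: y_def f_def matrix_vector_mult_scaleR power2_eq_square)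
    moreover have "(norm x)^2 = x \<bullet> x" by (simp add: dot_square_norm)
    moreover have "norm x > 0" using False by simp
    ultimately show ?thesis by (simp add: divide_le_eq mult.commute)
  qed
  have eig: "A *v v = \<mu> *\<^sub>R v"
    by (rule psd_eig[OF symm]) (use bound vv in \<open>auto simp: f_def \<mu>_def\<close>)
  have "v \<noteq> 0" using v by auto
  hence mem: "\<mu> \<in> {l. \<exists>v. v \<noteq> 0 \<and> A *v v = l *\<^sub>R v}" using eig by auto
  have mu_le: "\<mu> \<le> lambda_max A"
    unfolding lambda_max_def using finite_eigs[OF symm] mem by (rule Max_ge)
  have mu_pos: "\<mu> > 0" using pd \<open>v \<noteq> 0\<close> by (simp add: pos_def_def \<mu>_def f_def)
  have "x \<bullet> (A *v x) \<le> lambda_max A * (x \<bullet> x)" for x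
  proof -
    have "f x \<le> \<mu> * (x \<bullet> x)" by (rule bound)
    also have "\<dots> \<le> lambda_max A * (x \<bullet> x)" using mu_le by (simp add: mult_right_mono)
    finally show ?thesis by (simp add: f_def)
  qed
  thus ?thesis using mu_le mu_pos by auto
qed

lemma lmin_bound:
  fixes A :: "real^'n^'n"
  assumes pd: "pos_def A"
  shows "\<exists>m>0. \<forall>x. m * (x \<bullet> x) \<le> x \<bullet> (A *v x)"
proof -
  define f where "f x = x \<bullet> (A *v x)" for x :: "real^'n"
  have "\<exists>v\<in>sphere 0 1. \<forall>y\<in>sphere 0 1. f v \<le> f y"
    by (rule continuous_attains_inf) (auto simp: f_def intro!: continuous_intros)
  then obtain v where v: "v \<in> sphere 0 1" and vmin: "\<And>y. y \<in> sphere 0 1 \<Longrightarrow> f v \<le> f y" by blast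
  define m where "m = f v"
  have "v \<noteq> 0" using v by auto
  hence mpos: "m > 0" using pd by (simp add: pos_def_def m_def f_def)
  have "m * (x \<bullet> x) \<le> f x" for x
  proof (cases "x = 0")
    case True thus ?thesis by (simp add: f_def)
  next
    case False
    define y where "y = (1 / norm x) *\<^sub>R x"
    have "y \<in> sphere 0 1" using False by (simp add: y_def)
    hence "m \<le> f y" using vmin by (simp add: m_def)
    moreover have "f y = f x / (norm x)^2"
      by (simp add: y_def f_def matrix_vector_mult_scaleR power2_eq_square)
    moreover have "(norm x)^2 = x \<bullet> x" by (simp add: dot_square_norm)
    moreover have "norm x > 0" using False by simp
    ultimately show ?thesis by (simp add: le_divide_eq mult.commute)
  qed
  thus ?thesis using mpos unfolding f_def by blast
qed

lemma Vstep:
  fixes A :: "real^'n^'n" and h :: real and x y :: "real^'n"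
  assumes symm: "transpose A = A"
  defines "V \<equiv> \<lambda>x y. x \<bullet> x + h * (x \<bullet> (A *v x)) - 2 * h * (x \<bullet> (A *v y)) + 2 * h * (y \<bullet> (A *v y))"
  shows "V (x - h *\<^sub>R (A *v y)) x = V x y - (2 * h * (y \<bullet> (A *v y)) - h^2 * ((A *v y) \<bullet> (A *v y)) - h^3 * ((A *v y) \<bullet> (A *v (A *v y))))"
proof -
  define c where "c = A *v y"
  define a where "a = A *v x"
  have s1: "x \<bullet> (A *v c) = a \<bullet> c" unfolding a_def by (rule sym_dot[OF symm])
  have E1: "(x - h *\<^sub>R c) \<bullet> (x - h *\<^sub>R c) = x \<bullet> x - 2 * h * (x \<bullet> c) + h^2 * (c \<bullet> c)"
    by (simp add: inner_diff_left inner_diff_right inner_commute power2_eq_square algebra_simps)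
  have E2: "(x - h *\<^sub>R c) \<bullet> (A *v (x - h *\<^sub>R c)) = x \<bullet> a - 2 * h * (a \<bullet> c) + h^2 * (c \<bullet> (A *v c))"
  proof -
    have "A *v (x - h *\<^sub>R c) = a - h *\<^sub>R (A *v c)"
      by (simp add: a_def matrix_vector_mult_diff_distrib matrix_vector_mult_scaleR)
    hence "(x - h *\<^sub>R c) \<bullet> (A *v (x - h *\<^sub>R c)) = x \<bullet> a - h * (x \<bullet> (A *v c)) - h * (c \<bullet> a) + h^2 * (c \<bullet> (A *v c))"
      by (simp add: inner_diff_left inner_diff_right power2_eq_square algebra_simps)
    thus ?thesis using s1 by (simp add: inner_commute)
  qed
  have E3: "(x - h *\<^sub>R c) \<bullet> a = x \<bullet> a - h * (a \<bullet> c)"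
    by (simp add: inner_diff_left inner_diff_right inner_commute)
  have "V (x - h *\<^sub>R c) x = (x - h *\<^sub>R c) \<bullet> (x - h *\<^sub>R c) + h * ((x - h *\<^sub>R c) \<bullet> (A *v (x - h *\<^sub>R c))) - 2 * h * ((x - h *\<^sub>R c) \<bullet> a) + 2 * h * (x \<bullet> a)"
    unfolding V_def a_def by (rule refl)
  also have "\<dots> = (x \<bullet> x - 2 * h * (x \<bullet> c) + h^2 * (c \<bullet> c)) + h * (x \<bullet> a - 2 * h * (a \<bullet> c) + h^2 * (c \<bullet> (A *v c))) - 2 * h * (x \<bullet> a - h * (a \<bullet> c)) + 2 * h * (x \<bullet> a)"
    by (simp only: E1 E2 E3)
  also have "\<dots> = x \<bullet> x + h * (x \<bullet> a) - 2 * h * (x \<bullet> c) + 2 * h * (y \<bullet> (A *v y)) - (2 * h * (y \<bullet> (A *v y)) - h^2 * (c \<bullet> c) - h^3 * (c \<bullet> (A *v c)))"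
    by (simp add: algebra_simps power2_eq_square power3_eq_cube)
  also have "\<dots> = V x y - (2 * h * (y \<bullet> (A *v y)) - h^2 * (c \<bullet> c) - h^3 * (c \<bullet> (A *v c)))"
    unfolding V_def a_def c_def by (rule refl)
  finally show ?thesis by (simp add: c_def)
qed

theorem theorem4:
  fixes A :: "real^'n^'n" and b ustar :: "real^'n" and \<delta> \<eta> :: real
    and u :: "nat \<Rightarrow> real^'n"
  assumes symm: "transpose A = A"
    and pd: "pos_def A"
    and sol: "A *v ustar + b = 0"
    and uniq: "\<And>v. A *v v + b = 0 \<Longrightarrow> v = ustar"
    and u0: "u 0 = 0" and u1: "u 1 = 0"
    and rec: "\<And>l. l \<ge> 1 \<Longrightarrow> u (l + 1) = u l - (\<delta> * \<eta>) *\<^sub>R (A *v u (l - 1) + b)"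
    and step_pos: "0 < \<delta> * \<eta>"
    and step_small: "\<delta> * \<eta> < 1 / (4 * lambda_max A)"
  shows "u \<longlonglongrightarrow> ustar"
proof -
  define h where "h = \<delta> * \<eta>"
  define \<mu> where "\<mu> = lambda_max A"
  have hpos: "h > 0" using step_pos by (simp add: h_def)
  have mu: "\<mu> > 0" "\<And>x. x \<bullet> (A *v x) \<le> \<mu> * (x \<bullet> x)"
    using lmax_bound[OF symm pd] by (auto simp: \<mu>_def)
  have hmu: "h * \<mu> < 1/4"
  proof -
    have "h < 1 / (4 * \<mu>)" using step_small by (simp add: h_def \<mu>_def)
    hence "h * (4 * \<mu>) < 1" using mu(1) by (simp add: pos_less_divide_eq)
    thus ?thesis by simp
  qed
  obtain m where m: "m > 0" "\<And>x. m * (x \<bullet> x) \<le> x \<bullet> (A *v x)" using lmin_bound[OF pd] by blast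
  have Qnn: "0 \<le> x \<bullet> (A *v x)" for x
  proof -
    have "0 \<le> m * (x \<bullet> x)" using m(1) by simp
    thus ?thesis using m(2)[of x] by linarith
  qed
  define e where "e n = u n - ustar" for n
  have erec: "e (n + 2) = e (n + 1) - h *\<^sub>R (A *v e n)" for n
  proof -
    have "u (n + 2) = u (n + 1) - h *\<^sub>R (A *v u n + b)"
      using rec[of "n+1"] by (simp add: h_def)
    moreover have "A *v u n + b = A *v e n"
      using sol by (simp add: e_def matrix_vector_mult_diff_distrib algebra_simps eq_neg_iff_add_eq_0)
    ultimately show ?thesis by (simp add: e_def)
  qed
  define V where "V \<equiv> \<lambda>x y. x \<bullet> x + h * (x \<bullet> (A *v x)) - 2 * h * (x \<bullet> (A *v y)) + 2 * h * (y \<bullet> (A *v y))"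
  have Vnn: "x \<bullet> x \<le> V x y" for x y
  proof -
    have "(x - y) \<bullet> (A *v (x - y)) = x \<bullet> (A *v x) - 2 * (x \<bullet> (A *v y)) + y \<bullet> (A *v y)"
      using sym_dot[OF symm, of y x]
      by (simp add: matrix_vector_mult_diff_distrib inner_diff_left inner_diff_right inner_commute)
    hence "0 \<le> x \<bullet> (A *v x) - 2 * (x \<bullet> (A *v y)) + y \<bullet> (A *v y)" using Qnn[of "x - y"] by simp
    hence "0 \<le> h * (x \<bullet> (A *v x) - 2 * (x \<bullet> (A *v y)) + y \<bullet> (A *v y))" using hpos by simp
    moreover have "0 \<le> h * (y \<bullet> (A *v y))" using hpos Qnn by simp
    ultimately show ?thesis unfolding V_def by (simp add: algebra_simps)
  qed
  have dec: "V (x - h *\<^sub>R (A *v y)) x \<le> V x y - h * (y \<bullet> (A *v y))" for x y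
  proof -
    define c where "c = A *v y"
    define q where "q = y \<bullet> (A *v y)"
    have cc: "c \<bullet> c \<le> \<mu> * q"
    proof -
      define t where "t = 1 / \<mu>"
      have tp: "t > 0" using mu(1) by (simp add: t_def)
      have "0 \<le> (t *\<^sub>R c - y) \<bullet> (A *v (t *\<^sub>R c - y))" by (rule Qnn)
      also have "\<dots> = t^2 * (c \<bullet> (A *v c)) - 2 * t * (c \<bullet> c) + q"
        using sym_dot[OF symm, of y c]
        by (simp add: q_def c_def matrix_vector_mult_diff_distrib matrix_vector_mult_scaleR inner_diff_left
            inner_diff_right inner_commute power2_eq_square algebra_simps)
      finally have 1: "2 * t * (c \<bullet> c) \<le> t^2 * (c \<bullet> (A *v c)) + q" by simp
      have "t^2 * (c \<bullet> (A *v c)) \<le> t^2 * (\<mu> * (c \<bullet> c))" using mu(2)[of c] by (simp add: mult_left_mono)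
      also have "\<dots> = t * (c \<bullet> c)" using mu(1) by (simp add: t_def power2_eq_square)
      finally have "t * (c \<bullet> c) \<le> q" using 1 by simp
      hence "\<mu> * (t * (c \<bullet> c)) \<le> \<mu> * q" using mu(1) by (simp add: mult_left_mono)
      thus ?thesis using mu(1) by (simp add: t_def)
    qed
    have q0: "q \<ge> 0" using Qnn by (simp add: q_def)
    have cAc: "c \<bullet> (A *v c) \<le> \<mu>^2 * q"
    proof -
      have "c \<bullet> (A *v c) \<le> \<mu> * (c \<bullet> c)" by (rule mu(2))
      also have "\<dots> \<le> \<mu> * (\<mu> * q)" using cc mu(1) by (simp add: mult_left_mono)
      finally show ?thesis by (simp add: power2_eq_square)
    qed
    have t1: "h^2 * (c \<bullet> c) \<le> h * q / 4"
    proof -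
      have "h^2 * (c \<bullet> c) \<le> h^2 * (\<mu> * q)" using cc by (simp add: mult_left_mono)
      also have "\<dots> = (h * \<mu>) * (h * q)" by (simp add: power2_eq_square)
      also have "\<dots> \<le> (1/4) * (h * q)" using hmu hpos q0 by (intro mult_right_mono) auto
      finally show ?thesis by simp
    qed
    have t2: "h^3 * (c \<bullet> (A *v c)) \<le> h * q / 2"
    proof -
      have "h^3 * (c \<bullet> (A *v c)) \<le> h^3 * (\<mu>^2 * q)" using cAc hpos by (simp add: mult_left_mono)
      also have "\<dots> = (h * \<mu>)^2 * (h * q)" by (simp add: power2_eq_square power3_eq_cube)
      also have "\<dots> \<le> (1/2) * (h * q)"
      proof (rule mult_right_mono)
        have "0 \<le> h * \<mu>" using hpos mu(1) by simp
        hence "(h * \<mu>)^2 \<le> (1/4)^2" using hmu by (intro power_mono) auto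
        moreover have "(1/4::real)^2 \<le> 1/2" by (simp add: power2_eq_square)
        ultimately show "(h * \<mu>)^2 \<le> 1/2" by linarith
        show "0 \<le> h * q" using hpos q0 by simp
      qed
      finally show ?thesis by simp
    qed
    have "V (x - h *\<^sub>R (A *v y)) x = V x y - (2 * h * q - h^2 * (c \<bullet> c) - h^3 * (c \<bullet> (A *v c)))"
      unfolding V_def q_def c_def by (rule Vstep[OF symm, unfolded Let_def])
    moreover have "2 * h * q = 2 * (h * q)" by simp
    moreover have "0 \<le> h * q" using hpos q0 by simp
    ultimately show ?thesis using t1 t2 unfolding q_def[symmetric] by linarith
  qed
  define W where "W n = V (e (n + 1)) (e n)" for n
  have Wdec: "W (Suc n) \<le> W n - h * (e n \<bullet> (A *v e n))" for n
    using dec[of "e (n+1)" "e n"] erec[of n] by (simp add: W_def numeral_2_eq_2)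
  have Wnn: "0 \<le> W n" for n
    unfolding W_def using Vnn[of "e (n+1)" "e n"] inner_ge_zero[of "e (n+1)"] by linarith
  have hQ: "0 \<le> h * (e n \<bullet> (A *v e n))" for n using hpos Qnn by simp
  have "decseq W"
    by (rule decseq_SucI) (use Wdec hQ in \<open>smt (verit)\<close>)
  then obtain L where WL: "W \<longlonglongrightarrow> L" using decseq_convergent[of W 0] Wnn by blast
  hence "(\<lambda>n. W n - W (Suc n)) \<longlonglongrightarrow> L - L"
    by (intro tendsto_diff) (auto simp: LIMSEQ_Suc)
  hence D: "(\<lambda>n. W n - W (Suc n)) \<longlonglongrightarrow> 0" by simp
  have "(\<lambda>n. (h * m) * (e n \<bullet> e n)) \<longlonglongrightarrow> 0"
  proof (rule tendsto_sandwich[OF _ _ tendsto_const D])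
    show "\<forall>\<^sub>F n in sequentially. 0 \<le> (h * m) * (e n \<bullet> e n)"
      using hpos m(1) by simp
    show "\<forall>\<^sub>F n in sequentially. (h * m) * (e n \<bullet> e n) \<le> W n - W (Suc n)"
    proof (intro always_eventually allI)
      fix n
      have "(h * m) * (e n \<bullet> e n) = h * (m * (e n \<bullet> e n))" by simp
      also have "\<dots> \<le> h * (e n \<bullet> (A *v e n))" using m(2) hpos by (simp add: mult_left_mono)
      finally show "(h * m) * (e n \<bullet> e n) \<le> W n - W (Suc n)" using Wdec[of n] by simp
    qed
  qed
  hence "(\<lambda>n. (1 / (h * m)) * ((h * m) * (e n \<bullet> e n))) \<longlonglongrightarrow> (1 / (h * m)) * 0"
    by (intro tendsto_mult tendsto_const)
  hence "(\<lambda>n. e n \<bullet> e n) \<longlonglongrightarrow> 0" using hpos m(1) by simp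
  hence "(\<lambda>n. sqrt (e n \<bullet> e n)) \<longlonglongrightarrow> sqrt 0" by (rule tendsto_real_sqrt)
  hence "(\<lambda>n. norm (e n)) \<longlonglongrightarrow> 0" by (simp add: norm_eq_sqrt_inner)
  hence "e \<longlonglongrightarrow> 0" by (simp add: tendsto_norm_zero_iff)
  hence "(\<lambda>n. e n + ustar) \<longlonglongrightarrow> 0 + ustar" by (intro tendsto_add tendsto_const)
  thus ?thesis by (simp add: e_def)
qed

end
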